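(* Let $k$ be a field of characteristic different from $2$, $d\in k$, and $E\subset\mathbb{P}^3$ the elliptic curve $X_0^2+dX_3^2=X_1^2+X_2^2$, $X_0X_3=X_1X_2$, with identity $(1:0:1:0)$. Let $\mathscr{K}_2=E^2/\{\pm1\}$ be modelled in $\mathbb{P}^3\times\mathbb{P}^1$, with coordinates $\big((U_0:U_1:U_2:U_3),(Z_0:Z_1)\big)$, as the variety cut out by $U_0U_3=U_1U_2$ and $(U_0^2-U_1^2-U_2^2+U_3^2)Z_0^2=(U_0^2-dU_1^2-dU_2^2+d^2U_3^2)Z_1^2$, via the projection $(P,Q)\mapsto\big((X_0Y_0:X_2Y_0:X_0Y_2:X_2Y_2),(X_0Y_0:X_1Y_1)\big)$ for $(P,Q)=\big((X_0:X_1:X_2:X_3),(Y_0:Y_1:Y_2:Y_3)\big)$. Let $\tau:\mathscr{K}_2\to\mathscr{K}_2$ be the endomorphism induced by $\tau(P,Q)=(P+Q,Q)$ on $E^2$. Then $$\pi_1\circ\tau=(U_0Z_0-dU_3Z_1\;:\;-U_0Z_1+U_3Z_0),\qquad \pi_2\circ\tau=(U_0:U_2)=(U_1:U_3),$$ and $\pi_3\circ\tau$ is given by either of the equivalent expressions $$\big((U_0^2-dU_3^2)Z_0\;:\;(U_0U_1-U_2U_3)Z_0+(U_0U_2-dU_1U_3)Z_1\big),$$ $$\big(-(U_0U_2-U_1U_3)Z_0+(U_0U_1-dU_2U_3)Z_1\;:\;(U_1^2-U_2^2)Z_1\big).$$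
   Context: $\mathscr{K}_1=E/\{\pm1\}\cong\mathbb{P}^1$ via $(X_0:X_1:X_2:X_3)\mapsto(X_0:X_2)$; $-1$ acts diagonally on $E^2$. The projections $\pi_1,\pi_2:\mathscr{K}_2\to\mathscr{K}_1$ and $\pi_3:\mathscr{K}_2\to\mathbb{P}^1$ are $\pi_1=(U_0:U_1)=(U_2:U_3)$, $\pi_2=(U_0:U_2)=(U_1:U_3)$, $\pi_3=(Z_0:Z_1)$. "Given by" a polynomial expression means the morphism equals the displayed tuple wherever its components do not all vanish on $\mathscr{K}_2$. *)

theory Defs
  imports Main
begin

text \<open>Projective points are represented by (nonzero) coordinate tuples over a field;
  two tuples represent the same point iff they are nonzero scalar multiples of each other.\<close>

type_synonym 'a pt3 = "'a \<times> 'a \<times> 'a \<times> 'a"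
type_synonym 'a pt1 = "'a \<times> 'a"

definition same_pt1 :: "'a::field pt1 \<Rightarrow> 'a pt1 \<Rightarrow> bool" where
  "same_pt1 u v \<longleftrightarrow> v \<noteq> (0,0) \<and>
     (\<exists>c. c \<noteq> 0 \<and> fst u = c * fst v \<and> snd u = c * snd v)"

definition same_pt3 :: "'a::field pt3 \<Rightarrow> 'a pt3 \<Rightarrow> bool" where
  "same_pt3 u v \<longleftrightarrow> v \<noteq> (0,0,0,0) \<and>
     (case u of (u0,u1,u2,u3) \<Rightarrow> case v of (v0,v1,v2,v3) \<Rightarrow>
       (\<exists>c. c \<noteq> 0 \<and> u0 = c * v0 \<and> u1 = c * v1 \<and> u2 = c * v2 \<and> u3 = c * v3))"

definition on_E :: "'a::field \<Rightarrow> 'a pt3 \<Rightarrow> bool" where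
  "on_E d X \<longleftrightarrow> X \<noteq> (0,0,0,0) \<and>
     (case X of (X0,X1,X2,X3) \<Rightarrow> X0^2 + d*X3^2 = X1^2 + X2^2 \<and> X0*X3 = X1*X2)"

definition E_identity :: "'a::field pt3" where
  "E_identity = (1,0,1,0)"

text \<open>A complete system of bidegree (2,2) addition laws for the group law of E with
  identity (1:0:1:0) (the Edwards group law x^2+y^2 = 1 + d x^2 y^2,
  x = X1/X0, y = X2/X0; standard and dual addition formulas, combined).\<close>

definition E_add_laws :: "'a::field \<Rightarrow> 'a pt3 \<Rightarrow> 'a pt3 \<Rightarrow> 'a pt3 list" where
  "E_add_laws d X Y = (case X of (X0,X1,X2,X3) \<Rightarrow> case Y of (Y0,Y1,Y2,Y3) \<Rightarrow>
     let A  = X0*Y0 + d*X3*Y3;  B  = X0*Y0 - d*X3*Y3;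
         C  = X1*Y2 + X2*Y1;    D  = X2*Y2 - X1*Y1;
         A' = X1*Y1 + X2*Y2;    C' = X3*Y0 + X0*Y3;
         D' = X3*Y0 - X0*Y3;    B' = X1*Y2 - X2*Y1
     in [(A*B, C*B, D*A, C*D), (A'*B, C'*B, D*A', C'*D),
         (A*B', C*B', D'*A, C*D'), (A'*B', C'*B', D'*A', C'*D')])"

definition E_sum :: "'a::field \<Rightarrow> 'a pt3 \<Rightarrow> 'a pt3 \<Rightarrow> 'a pt3 \<Rightarrow> bool" where
  "E_sum d P Q R \<longleftrightarrow> on_E d R \<and>
     (\<forall>s\<in>set (E_add_laws d P Q). s \<noteq> (0,0,0,0) \<longrightarrow> same_pt3 s R)"

text \<open>K_1 = E/{+-1} = P^1 via (X0:X2) = (X1:X3): v represents the image of X.\<close>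

definition K1_image :: "'a::field pt3 \<Rightarrow> 'a pt1 \<Rightarrow> bool" where
  "K1_image X v \<longleftrightarrow> v \<noteq> (0,0) \<and>
     (case X of (X0,X1,X2,X3) \<Rightarrow>
        ((X0,X2) \<noteq> (0,0) \<longrightarrow> same_pt1 (X0,X2) v) \<and>
        ((X1,X3) \<noteq> (0,0) \<longrightarrow> same_pt1 (X1,X3) v))"

text \<open>Second component of the projection E^2 \<rightarrow> K_2: (X0Y0 : X1Y1), together with the
  equivalent representatives (X2Y2:X3Y3), (X0Y2:X1Y3), (X2Y0:X3Y1) on E^2.\<close>

definition K2_Z_image :: "'a::field pt3 \<Rightarrow> 'a pt3 \<Rightarrow> 'a pt1 \<Rightarrow> bool" where
  "K2_Z_image X Y w \<longleftrightarrow> w \<noteq> (0,0) \<and>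
     (case X of (X0,X1,X2,X3) \<Rightarrow> case Y of (Y0,Y1,Y2,Y3) \<Rightarrow>
        (\<forall>u\<in>{(X0*Y0, X1*Y1), (X2*Y2, X3*Y3), (X0*Y2, X1*Y3), (X2*Y0, X3*Y1)}.
            u \<noteq> (0,0) \<longrightarrow> same_pt1 u w))"

definition on_K2 :: "'a::field \<Rightarrow> 'a pt3 \<Rightarrow> 'a pt1 \<Rightarrow> bool" where
  "on_K2 d U Z \<longleftrightarrow> U \<noteq> (0,0,0,0) \<and> Z \<noteq> (0,0) \<and>
     (case U of (U0,U1,U2,U3) \<Rightarrow> case Z of (Z0,Z1) \<Rightarrow>
        U0*U3 = U1*U2 \<and>
        (U0^2 - U1^2 - U2^2 + U3^2) * Z0^2 = (U0^2 - d*U1^2 - d*U2^2 + d^2*U3^2) * Z1^2)"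

definition K2_image :: "'a::field \<Rightarrow> 'a pt3 \<Rightarrow> 'a pt3 \<Rightarrow> 'a pt3 \<Rightarrow> 'a pt1 \<Rightarrow> bool" where
  "K2_image d P Q U Z \<longleftrightarrow> on_K2 d U Z \<and>
     (\<exists>a b. K1_image P a \<and> K1_image Q b \<and>
        same_pt3 U (fst a * fst b, snd a * fst b, fst a * snd b, snd a * snd b)) \<and>
     K2_Z_image P Q Z"

end

theory Submission
  imports Defs
begin

definition ten :: "'a::field pt1 \<Rightarrow> 'a pt1 \<Rightarrow> 'a pt3" where
  "ten e f = (fst e * fst f, fst e * snd f, snd e * fst f, snd e * snd f)"

lemma same1_cross:
  fixes u v :: "'a::field pt1"
  assumes "u \<noteq> (0,0)" "v \<noteq> (0,0)" "fst u * snd v = snd u * fst v"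
  shows "same_pt1 u v"
proof -
  obtain u0 u1 v0 v1 where uv: "u = (u0,u1)" "v = (v0,v1)" by (cases u, cases v) auto
  show ?thesis
  proof (cases "v0 = 0")
    case True
    then have "v1 \<noteq> 0" using assms uv by auto
    then have "u0 = 0" using assms uv True by auto
    then have "u1 \<noteq> 0" using assms uv by auto
    show ?thesis unfolding same_pt1_def uv using True \<open>v1 \<noteq> 0\<close> \<open>u0 = 0\<close> \<open>u1 \<noteq> 0\<close>
      by (auto intro!: exI[of _ "u1/v1"])
  next
    case False
    have "u0 \<noteq> 0"
    proof
      assume "u0 = 0"
      then have "u1 * v0 = 0" using assms uv by auto
      then have "u1 = 0" using False by auto
      then show False using \<open>u0 = 0\<close> assms uv by auto
    qed
    show ?thesis unfolding same_pt1_def uv using False \<open>u0 \<noteq> 0\<close> assms uv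
      by (auto intro!: exI[of _ "u0/v0"] simp: field_simps)
  qed
qed

lemma same1_crossD:
  fixes u v :: "'a::field pt1"
  assumes "same_pt1 u v" shows "fst u * snd v = snd u * fst v"
  using assms unfolding same_pt1_def by auto

lemma K1_ten:
  fixes e f w :: "'a::field pt1"
  assumes "w \<noteq> (0,0)" "fst e * snd w = snd e * fst w"
  shows "K1_image (ten e f) w"
proof -
  obtain e0 e1 f0 f1 w0 w1 where t: "e = (e0,e1)" "f = (f0,f1)" "w = (w0,w1)"
    by (cases e, cases f, cases w) auto
  have c: "e0 * w1 = e1 * w0" using assms t by simp
  show ?thesis unfolding K1_image_def ten_def t using assms(1) t
    by (auto intro!: same1_cross simp: c mult.assoc mult.left_commute[of f0] mult.left_commute[of f1])
qed

lemma Z_ten: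
  fixes e f b n w :: "'a::field pt1"
  assumes "w \<noteq> (0,0)" "fst f * fst n * snd w = snd f * snd n * fst w"
  shows "K2_Z_image (ten e f) (ten b n) w"
proof -
  obtain e0 e1 f0 f1 w0 w1 b0 b1 n0 n1 where t: "e = (e0,e1)" "f = (f0,f1)" "w = (w0,w1)"
    "b = (b0,b1)" "n = (n0,n1)"
    by (cases e, cases f, cases w, cases b, cases n) auto
  have c: "f0 * n0 * w1 = f1 * n1 * w0" using assms t by simp
  have c2: "\<And>x y. x*f0*(y*n0)*w1 = x*f1*(y*n1)*w0"
  proof -
    fix x y
    have "x*f0*(y*n0)*w1 = x*y*(f0 * n0 * w1)" by (simp add: algebra_simps)
    also have "\<dots> = x*y*(f1 * n1 * w0)" using c by simp
    also have "\<dots> = x*f1*(y*n1)*w0" by (simp add: algebra_simps)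
    finally show "x*f0*(y*n0)*w1 = x*f1*(y*n1)*w0" .
  qed
  show ?thesis unfolding K2_Z_image_def ten_def t using assms(1) t
    by (auto intro!: same1_cross simp: c2)
qed

lemma ten_zero:
  fixes e f :: "'a::field pt1"
  shows "ten e f = (0,0,0,0) \<longleftrightarrow> e = (0,0) \<or> f = (0,0)"
  by (cases e, cases f) (auto simp: ten_def)

lemma decomp:
  fixes P :: "'a::field pt3" and a :: "'a pt1"
  assumes P: "on_E d P" and a: "K1_image P a"
  shows "\<exists>m. m \<noteq> (0,0) \<and> P = ten a m"
proof -
  obtain p0 p1 p2 p3 where Pd: "P = (p0,p1,p2,p3)" by (cases P) auto
  obtain a0 a1 where ad: "a = (a0,a1)" by (cases a) auto
  have anz: "(a0,a1) \<noteq> (0,0)" using a ad unfolding K1_image_def by auto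
  have Pnz: "(p0,p1,p2,p3) \<noteq> (0,0,0,0)" using P Pd unfolding on_E_def by auto
  have c1: "p0 * a1 = p2 * a0"
  proof (cases "(p0,p2) = (0,0)")
    case False
    then have "same_pt1 (p0,p2) (a0,a1)" using a Pd ad unfolding K1_image_def by auto
    then show ?thesis using same1_crossD by fastforce
  qed auto
  have c2: "p1 * a1 = p3 * a0"
  proof (cases "(p1,p3) = (0,0)")
    case False
    then have "same_pt1 (p1,p3) (a0,a1)" using a Pd ad unfolding K1_image_def by auto
    then show ?thesis using same1_crossD by fastforce
  qed auto
  show ?thesis
  proof (cases "a0 = 0")
    case False
    have "P = ten a (p0/a0, p1/a0)" unfolding Pd ad ten_def using False c1 c2
      by (auto simp: field_simps)
    moreover have "(p0/a0, p1/a0) \<noteq> (0,0)"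
    proof
      assume "(p0/a0, p1/a0) = (0,0)"
      then have "p0 = 0" "p1 = 0" using False by auto
      then have "p2 = 0" "p3 = 0" using c1 c2 False by auto
      then show False using Pnz \<open>p0 = 0\<close> \<open>p1 = 0\<close> by auto
    qed
    ultimately show ?thesis by blast
  next
    case True
    then have a1: "a1 \<noteq> 0" using anz by auto
    then have "p0 = 0" "p1 = 0" using c1 c2 True by auto
    have "P = ten a (p2/a1, p3/a1)" unfolding Pd ad ten_def using True a1 \<open>p0 = 0\<close> \<open>p1 = 0\<close>
      by (auto simp: field_simps)
    moreover have "(p2/a1, p3/a1) \<noteq> (0,0)" using Pnz \<open>p0 = 0\<close> \<open>p1 = 0\<close> a1 by auto
    ultimately show ?thesis by blast
  qed
qed

lemma Zcases:
  fixes m0 m1 n0 n1 Z0 Z1 :: "'a::field"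
  assumes h: "m0*n0*Z1 = m1*n1*Z0" and mn: "(m0,m1) \<noteq> (0,0)" "(n0,n1) \<noteq> (0,0)"
  shows "(\<exists>l. Z0 = l*m0*n0 \<and> Z1 = l*m1*n1) \<or> (m0 = 0 \<and> n1 = 0) \<or> (m1 = 0 \<and> n0 = 0)"
proof (cases "m0*n0 = 0")
  case False
  have "Z0 = (Z0/(m0*n0))*m0*n0" using False by (simp add: field_simps)
  moreover have "Z1 = (Z0/(m0*n0))*m1*n1" using False h by (simp add: field_simps)
  ultimately show ?thesis by blast
next
  case True
  show ?thesis
  proof (cases "m1*n1 = 0")
    case False
    have "Z0 = 0" using h True False by simp
    then have "Z0 = (Z1/(m1*n1))*m0*n0" using True by simp
    moreover have "Z1 = (Z1/(m1*n1))*m1*n1" using False by (simp add: field_simps)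
    ultimately show ?thesis by blast
  next
    case False2: True
    show ?thesis using True False2 mn by auto
  qed
qed

lemma compA:
  fixes a0 a1 b0 b1 m0 m1 n0 n1 d :: "'a::field"
  assumes hP: "m0^2*(a0^2-a1^2) = m1^2*(a0^2-d*a1^2)"
      and hQ: "n0^2*(b0^2-b1^2) = n1^2*(b0^2-d*b1^2)"
      and e: "a0*b0*m0*n0 + d*a1*b1*m1*n1 = 0" "a0*b1*m1*n0 + a1*b0*m0*n1 = 0"
       "a0*b0*m1*n1 + a1*b1*m0*n0 = 0" "a1*b0*m1*n0 + a0*b1*m0*n1 = 0"
      and nz: "a0 \<noteq> 0 \<or> a1 \<noteq> 0" "b0 \<noteq> 0 \<or> b1 \<noteq> 0" "m0 \<noteq> 0 \<or> m1 \<noteq> 0" "n0 \<noteq> 0 \<or> n1 \<noteq> 0"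
      and d: "d \<noteq> 0" "d \<noteq> 1" "(2::'a) \<noteq> 0"
  shows False
  using nz apply (elim disjE) using hP hQ e d by algebra+

lemma compB:
  fixes a0 a1 b0 b1 m0 m1 n0 n1 d :: "'a::field"
  assumes hP: "m0^2*(a0^2-a1^2) = m1^2*(a0^2-d*a1^2)"
      and hQ: "n0^2*(b0^2-b1^2) = n1^2*(b0^2-d*b1^2)"
      and e: "a0*b0*m0*n0 - d*a1*b1*m1*n1 = 0" "a1*b1*m0*n0 - a0*b0*m1*n1 = 0"
       "a0*b1*m1*n0 - a1*b0*m0*n1 = 0" "a1*b0*m1*n0 - a0*b1*m0*n1 = 0"
      and nz: "a0 \<noteq> 0 \<or> a1 \<noteq> 0" "b0 \<noteq> 0 \<or> b1 \<noteq> 0" "m0 \<noteq> 0 \<or> m1 \<noteq> 0" "n0 \<noteq> 0 \<or> n1 \<noteq> 0"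
      and d: "d \<noteq> 0" "d \<noteq> 1" "(2::'a) \<noteq> 0"
  shows False
  using nz apply (elim disjE) using hP hQ e d by algebra+

lemma eI1:
  fixes a0 a1 b0 b1 m0 m1 n0 n1 d Z0 Z1 U0 U1 U2 U3 :: "'a::field"
  assumes hP: "m0^2*(a0^2-a1^2) = m1^2*(a0^2-d*a1^2)"
      and hQ: "n0^2*(b0^2-b1^2) = n1^2*(b0^2-d*b1^2)"
      and hZ: "m0*n0*Z1 = m1*n1*Z0"
      and mn: "(m0,m1) \<noteq> (0,0)" "(n0,n1) \<noteq> (0,0)"
      and U: "U0 = a0*b0" "U1 = a1*b0" "U2 = a0*b1" "U3 = a1*b1"
  shows "(a0*b0*m0*n0 - d*a1*b1*m1*n1)*(- U0*Z1 + U3*Z0) = (a1*b1*m0*n0 - a0*b0*m1*n1)*(U0*Z0 - d*U3*Z1)"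
  using Zcases[OF hZ mn] proof (elim disjE exE conjE)
  fix l assume "Z0 = l*m0*n0" "Z1 = l*m1*n1"
  then show ?thesis using hP hQ U by algebra
next
  assume "m0 = 0" "n1 = 0"
  then show ?thesis using hP hQ U by algebra
next
  assume "m1 = 0" "n0 = 0"
  then show ?thesis using hP hQ U by algebra
qed

lemma eI2:
  fixes a0 a1 b0 b1 m0 m1 n0 n1 d Z0 Z1 U0 U1 U2 U3 :: "'a::field"
  assumes hP: "m0^2*(a0^2-a1^2) = m1^2*(a0^2-d*a1^2)"
      and hQ: "n0^2*(b0^2-b1^2) = n1^2*(b0^2-d*b1^2)"
      and hZ: "m0*n0*Z1 = m1*n1*Z0"
      and mn: "(m0,m1) \<noteq> (0,0)" "(n0,n1) \<noteq> (0,0)"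
      and U: "U0 = a0*b0" "U1 = a1*b0" "U2 = a0*b1" "U3 = a1*b1"
  shows "(a0*b1*m1*n0 - a1*b0*m0*n1)*(- U0*Z1 + U3*Z0) = (a1*b0*m1*n0 - a0*b1*m0*n1)*(U0*Z0 - d*U3*Z1)"
  using Zcases[OF hZ mn] proof (elim disjE exE conjE)
  fix l assume "Z0 = l*m0*n0" "Z1 = l*m1*n1"
  then show ?thesis using hP hQ U by algebra
next
  assume "m0 = 0" "n1 = 0"
  then show ?thesis using hP hQ U by algebra
next
  assume "m1 = 0" "n0 = 0"
  then show ?thesis using hP hQ U by algebra
qed

lemma fI1:
  fixes a0 a1 b0 b1 m0 m1 n0 n1 d Z0 Z1 U0 U1 U2 U3 :: "'a::field"
  assumes hP: "m0^2*(a0^2-a1^2) = m1^2*(a0^2-d*a1^2)"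
      and hQ: "n0^2*(b0^2-b1^2) = n1^2*(b0^2-d*b1^2)"
      and hZ: "m0*n0*Z1 = m1*n1*Z0"
      and mn: "(m0,m1) \<noteq> (0,0)" "(n0,n1) \<noteq> (0,0)"
      and U: "U0 = a0*b0" "U1 = a1*b0" "U2 = a0*b1" "U3 = a1*b1"
  shows "(a0*b0*m0*n0 + d*a1*b1*m1*n1)*n0*((U0*U1 - U2*U3)*Z0 + (U0*U2 - d*U1*U3)*Z1) = (a0*b1*m1*n0 + a1*b0*m0*n1)*n1*((U0^2 - d*U3^2)*Z0)"
  using Zcases[OF hZ mn] proof (elim disjE exE conjE)
  fix l assume "Z0 = l*m0*n0" "Z1 = l*m1*n1"
  then show ?thesis using hP hQ U by algebra
next
  assume "m0 = 0" "n1 = 0"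
  then show ?thesis using hP hQ U by algebra
next
  assume "m1 = 0" "n0 = 0"
  then show ?thesis using hP hQ U by algebra
qed

lemma fI2:
  fixes a0 a1 b0 b1 m0 m1 n0 n1 d Z0 Z1 U0 U1 U2 U3 :: "'a::field"
  assumes hP: "m0^2*(a0^2-a1^2) = m1^2*(a0^2-d*a1^2)"
      and hQ: "n0^2*(b0^2-b1^2) = n1^2*(b0^2-d*b1^2)"
      and hZ: "m0*n0*Z1 = m1*n1*Z0"
      and mn: "(m0,m1) \<noteq> (0,0)" "(n0,n1) \<noteq> (0,0)"
      and U: "U0 = a0*b0" "U1 = a1*b0" "U2 = a0*b1" "U3 = a1*b1"
  shows "(a0*b0*m0*n0 + d*a1*b1*m1*n1)*n0*((U1^2 - U2^2)*Z1) = (a0*b1*m1*n0 + a1*b0*m0*n1)*n1*(- (U0*U2 - U1*U3)*Z0 + (U0*U1 - d*U2*U3)*Z1)"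
  using Zcases[OF hZ mn] proof (elim disjE exE conjE)
  fix l assume "Z0 = l*m0*n0" "Z1 = l*m1*n1"
  then show ?thesis using hP hQ U by algebra
next
  assume "m0 = 0" "n1 = 0"
  then show ?thesis using hP hQ U by algebra
next
  assume "m1 = 0" "n0 = 0"
  then show ?thesis using hP hQ U by algebra
qed

lemma fI3:
  fixes a0 a1 b0 b1 m0 m1 n0 n1 d Z0 Z1 U0 U1 U2 U3 :: "'a::field"
  assumes hP: "m0^2*(a0^2-a1^2) = m1^2*(a0^2-d*a1^2)"
      and hQ: "n0^2*(b0^2-b1^2) = n1^2*(b0^2-d*b1^2)"
      and hZ: "m0*n0*Z1 = m1*n1*Z0"
      and mn: "(m0,m1) \<noteq> (0,0)" "(n0,n1) \<noteq> (0,0)"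
      and U: "U0 = a0*b0" "U1 = a1*b0" "U2 = a0*b1" "U3 = a1*b1"
  shows "(a0*b0*m1*n1 + a1*b1*m0*n0)*n0*((U0*U1 - U2*U3)*Z0 + (U0*U2 - d*U1*U3)*Z1) = (a1*b0*m1*n0 + a0*b1*m0*n1)*n1*((U0^2 - d*U3^2)*Z0)"
  using Zcases[OF hZ mn] proof (elim disjE exE conjE)
  fix l assume "Z0 = l*m0*n0" "Z1 = l*m1*n1"
  then show ?thesis using hP hQ U by algebra
next
  assume "m0 = 0" "n1 = 0"
  then show ?thesis using hP hQ U by algebra
next
  assume "m1 = 0" "n0 = 0"
  then show ?thesis using hP hQ U by algebra
qed

lemma fI4:
  fixes a0 a1 b0 b1 m0 m1 n0 n1 d Z0 Z1 U0 U1 U2 U3 :: "'a::field"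
  assumes hP: "m0^2*(a0^2-a1^2) = m1^2*(a0^2-d*a1^2)"
      and hQ: "n0^2*(b0^2-b1^2) = n1^2*(b0^2-d*b1^2)"
      and hZ: "m0*n0*Z1 = m1*n1*Z0"
      and mn: "(m0,m1) \<noteq> (0,0)" "(n0,n1) \<noteq> (0,0)"
      and U: "U0 = a0*b0" "U1 = a1*b0" "U2 = a0*b1" "U3 = a1*b1"
  shows "(a0*b0*m1*n1 + a1*b1*m0*n0)*n0*((U1^2 - U2^2)*Z1) = (a1*b0*m1*n0 + a0*b1*m0*n1)*n1*(- (U0*U2 - U1*U3)*Z0 + (U0*U1 - d*U2*U3)*Z1)"
  using Zcases[OF hZ mn] proof (elim disjE exE conjE)
  fix l assume "Z0 = l*m0*n0" "Z1 = l*m1*n1"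
  then show ?thesis using hP hQ U by algebra
next
  assume "m0 = 0" "n1 = 0"
  then show ?thesis using hP hQ U by algebra
next
  assume "m1 = 0" "n0 = 0"
  then show ?thesis using hP hQ U by algebra
qed

lemma laws_ten:
  "E_add_laws d (a0*m0, a0*m1, a1*m0, a1*m1) (b0*n0, b0*n1, b1*n0, b1*n1) =
   [ten ((a0*b0*m0*n0 - d*a1*b1*m1*n1),(a1*b1*m0*n0 - a0*b0*m1*n1)) ((a0*b0*m0*n0 + d*a1*b1*m1*n1),(a0*b1*m1*n0 + a1*b0*m0*n1)), ten ((a0*b0*m0*n0 - d*a1*b1*m1*n1),(a1*b1*m0*n0 - a0*b0*m1*n1)) ((a0*b0*m1*n1 + a1*b1*m0*n0),(a1*b0*m1*n0 + a0*b1*m0*n1)), ten ((a0*b1*m1*n0 - a1*b0*m0*n1),(a1*b0*m1*n0 - a0*b1*m0*n1)) ((a0*b0*m0*n0 + d*a1*b1*m1*n1),(a0*b1*m1*n0 + a1*b0*m0*n1)), ten ((a0*b1*m1*n0 - a1*b0*m0*n1),(a1*b0*m1*n0 - a0*b1*m0*n1)) ((a0*b0*m1*n1 + a1*b1*m0*n0),(a1*b0*m1*n0 + a0*b1*m0*n1))]"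
  by (simp add: E_add_laws_def ten_def Let_def algebra_simps)


lemma same3_ten:
  fixes e f :: "'a::field pt1" and R :: "'a pt3"
  assumes "same_pt3 (ten e f) R"
  shows "\<exists>c. c \<noteq> 0 \<and> R = ten (fst e / c, snd e / c) f"
proof -
  obtain e0 e1 f0 f1 where t: "e = (e0,e1)" "f = (f0,f1)" by (cases e, cases f) auto
  obtain r0 r1 r2 r3 where r: "R = (r0,r1,r2,r3)" by (cases R) auto
  obtain c where c: "c \<noteq> 0" "e0*f0 = c*r0" "e0*f1 = c*r1" "e1*f0 = c*r2" "e1*f1 = c*r3"
    using assms unfolding same_pt3_def ten_def t r by auto
  have "R = ten (e0 / c, e1 / c) f" unfolding r ten_def t using c
    by (auto simp: field_simps)
  then show ?thesis using c t by auto
qed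

lemma hZ_lemma:
  fixes a m b n Z :: "'a::field pt1"
  assumes "K2_Z_image (ten a m) (ten b n) Z" "a \<noteq> (0,0)" "b \<noteq> (0,0)"
  shows "fst m * fst n * snd Z = snd m * snd n * fst Z"
proof -
  obtain a0 a1 b0 b1 m0 m1 n0 n1 Z0 Z1 where t: "a = (a0,a1)" "b = (b0,b1)" "m = (m0,m1)" "n = (n0,n1)" "Z = (Z0,Z1)"
    by (cases a, cases b, cases m, cases n, cases Z) auto
  have K: "\<forall>u\<in>{(a0*m0*(b0*n0), a0*m1*(b0*n1)), (a1*m0*(b1*n0), a1*m1*(b1*n1)),
                 (a0*m0*(b1*n0), a0*m1*(b1*n1)), (a1*m0*(b0*n0), a1*m1*(b0*n1))}.
            u \<noteq> (0,0) \<longrightarrow> same_pt1 u (Z0,Z1)"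
    using assms(1) unfolding K2_Z_image_def ten_def t by simp
  have key: "x \<noteq> 0 \<Longrightarrow> (x*(m0*n0), x*(m1*n1)) \<in> {(a0*m0*(b0*n0), a0*m1*(b0*n1)), (a1*m0*(b1*n0), a1*m1*(b1*n1)),
                 (a0*m0*(b1*n0), a0*m1*(b1*n1)), (a1*m0*(b0*n0), a1*m1*(b0*n1))} \<Longrightarrow> m0*n0*Z1 = m1*n1*Z0" for x
  proof -
    assume x: "x \<noteq> 0" and mem: "(x*(m0*n0), x*(m1*n1)) \<in> {(a0*m0*(b0*n0), a0*m1*(b0*n1)), (a1*m0*(b1*n0), a1*m1*(b1*n1)),
                 (a0*m0*(b1*n0), a0*m1*(b1*n1)), (a1*m0*(b0*n0), a1*m1*(b0*n1))}"
    show ?thesis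
    proof (cases "(m0*n0, m1*n1) = (0,0)")
      case True then show ?thesis by auto
    next
      case False
      then have "(x*(m0*n0), x*(m1*n1)) \<noteq> (0,0)" using x by auto
      then have "same_pt1 (x*(m0*n0), x*(m1*n1)) (Z0,Z1)" using K mem by blast
      then have "x*(m0*n0)*Z1 = x*(m1*n1)*Z0" using same1_crossD by fastforce
      then show ?thesis using x by (simp add: mult.assoc)
    qed
  qed
  have "m0*n0*Z1 = m1*n1*Z0"
  proof -
    have a: "a0 \<noteq> 0 \<or> a1 \<noteq> 0" and b: "b0 \<noteq> 0 \<or> b1 \<noteq> 0" using assms t by auto
    show ?thesis
      using a b
      apply (elim disjE)
         apply (rule key[of "a0*b0"]; simp add: algebra_simps)
        apply (rule key[of "a0*b1"]; simp add: algebra_simps)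
       apply (rule key[of "a1*b0"]; simp add: algebra_simps)
      apply (rule key[of "a1*b1"]; simp add: algebra_simps)
      done
  qed
  then show ?thesis using t by simp
qed

lemma core:
  fixes a0 a1 b0 b1 m0 m1 n0 n1 d Z0 Z1 U0 U1 U2 U3 :: "'a::field" and R :: "'a pt3"
  assumes char: "(2::'a) \<noteq> 0" and dd: "d \<noteq> 0" "d \<noteq> 1"
      and hP: "m0^2*(a0^2-a1^2) = m1^2*(a0^2-d*a1^2)"
      and hQ: "n0^2*(b0^2-b1^2) = n1^2*(b0^2-d*b1^2)"
      and hZ: "m0*n0*Z1 = m1*n1*Z0"
      and mn: "(m0,m1) \<noteq> (0,0)" "(n0,n1) \<noteq> (0,0)"
      and ab: "(a0,a1) \<noteq> (0,0)" "(b0,b1) \<noteq> (0,0)"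
      and U: "U0 = a0*b0" "U1 = a1*b0" "U2 = a0*b1" "U3 = a1*b1"
      and R: "\<forall>s\<in>set (E_add_laws d (a0*m0, a0*m1, a1*m0, a1*m1) (b0*n0, b0*n1, b1*n0, b1*n1)). s \<noteq> (0,0,0,0) \<longrightarrow> same_pt3 s R"
  shows "(((U0*Z0 - d*U3*Z1), (- U0*Z1 + U3*Z0)) \<noteq> (0,0) \<longrightarrow> K1_image R ((U0*Z0 - d*U3*Z1), (- U0*Z1 + U3*Z0)))
     \<and> ((((U0^2 - d*U3^2)*Z0), ((U0*U1 - U2*U3)*Z0 + (U0*U2 - d*U1*U3)*Z1)) \<noteq> (0,0) \<longrightarrow> K2_Z_image R (ten (b0,b1) (n0,n1)) (((U0^2 - d*U3^2)*Z0), ((U0*U1 - U2*U3)*Z0 + (U0*U2 - d*U1*U3)*Z1)))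
     \<and> (((- (U0*U2 - U1*U3)*Z0 + (U0*U1 - d*U2*U3)*Z1), ((U1^2 - U2^2)*Z1)) \<noteq> (0,0) \<longrightarrow> K2_Z_image R (ten (b0,b1) (n0,n1)) ((- (U0*U2 - U1*U3)*Z0 + (U0*U1 - d*U2*U3)*Z1), ((U1^2 - U2^2)*Z1)))"
proof -
  have R': "\<And>e f. e \<in> {((a0*b0*m0*n0 - d*a1*b1*m1*n1),(a1*b1*m0*n0 - a0*b0*m1*n1)),((a0*b1*m1*n0 - a1*b0*m0*n1),(a1*b0*m1*n0 - a0*b1*m0*n1))} \<Longrightarrow> f \<in> {((a0*b0*m0*n0 + d*a1*b1*m1*n1),(a0*b1*m1*n0 + a1*b0*m0*n1)),((a0*b0*m1*n1 + a1*b1*m0*n0),(a1*b0*m1*n0 + a0*b1*m0*n1))} \<Longrightarrow> ten e f \<noteq> (0,0,0,0) \<Longrightarrow> same_pt3 (ten e f) R"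
    using R by (auto simp: laws_ten)
  have nz: "a0 \<noteq> 0 \<or> a1 \<noteq> 0" "b0 \<noteq> 0 \<or> b1 \<noteq> 0" "m0 \<noteq> 0 \<or> m1 \<noteq> 0" "n0 \<noteq> 0 \<or> n1 \<noteq> 0"
    using ab mn by auto
  obtain e where e: "e \<in> {((a0*b0*m0*n0 - d*a1*b1*m1*n1),(a1*b1*m0*n0 - a0*b0*m1*n1)),((a0*b1*m1*n0 - a1*b0*m0*n1),(a1*b0*m1*n0 - a0*b1*m0*n1))}" "e \<noteq> (0,0)"
  proof -
    have "((a0*b0*m0*n0 - d*a1*b1*m1*n1),(a1*b1*m0*n0 - a0*b0*m1*n1)) \<noteq> (0,0) \<or> ((a0*b1*m1*n0 - a1*b0*m0*n1),(a1*b0*m1*n0 - a0*b1*m0*n1)) \<noteq> (0,0)"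
    proof (rule ccontr)
      assume "\<not> ?thesis"
      then have "(a0*b0*m0*n0 - d*a1*b1*m1*n1) = 0" "(a1*b1*m0*n0 - a0*b0*m1*n1) = 0" "(a0*b1*m1*n0 - a1*b0*m0*n1) = 0" "(a1*b0*m1*n0 - a0*b1*m0*n1) = 0" by auto
      then show False using compB[OF hP hQ _ _ _ _ nz dd(1) dd(2) char] by simp
    qed
    then show ?thesis using that by blast
  qed
  obtain f where f: "f \<in> {((a0*b0*m0*n0 + d*a1*b1*m1*n1),(a0*b1*m1*n0 + a1*b0*m0*n1)),((a0*b0*m1*n1 + a1*b1*m0*n0),(a1*b0*m1*n0 + a0*b1*m0*n1))}" "f \<noteq> (0,0)"
  proof -
    have "((a0*b0*m0*n0 + d*a1*b1*m1*n1),(a0*b1*m1*n0 + a1*b0*m0*n1)) \<noteq> (0,0) \<or> ((a0*b0*m1*n1 + a1*b1*m0*n0),(a1*b0*m1*n0 + a0*b1*m0*n1)) \<noteq> (0,0)"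
    proof (rule ccontr)
      assume "\<not> ?thesis"
      then have "(a0*b0*m0*n0 + d*a1*b1*m1*n1) = 0" "(a0*b1*m1*n0 + a1*b0*m0*n1) = 0" "(a0*b0*m1*n1 + a1*b1*m0*n0) = 0" "(a1*b0*m1*n0 + a0*b1*m0*n1) = 0" by auto
      then show False using compA[OF hP hQ _ _ _ _ nz dd(1) dd(2) char] by simp
    qed
    then show ?thesis using that by blast
  qed
  have "ten e f \<noteq> (0,0,0,0)" using e f ten_zero by blast
  then have "same_pt3 (ten e f) R" using R' e f by blast
  then obtain c where c: "c \<noteq> 0" "R = ten (fst e / c, snd e / c) f" using same3_ten by blast
  have eid: "fst e * (- U0*Z1 + U3*Z0) = snd e * (U0*Z0 - d*U3*Z1)"
    using e eI1[OF hP hQ hZ mn U] eI2[OF hP hQ hZ mn U] by auto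
  have fid4: "fst f * n0 * ((U0*U1 - U2*U3)*Z0 + (U0*U2 - d*U1*U3)*Z1) = snd f * n1 * ((U0^2 - d*U3^2)*Z0)"
    using f fI1[OF hP hQ hZ mn U] fI3[OF hP hQ hZ mn U] by auto
  have fid5: "fst f * n0 * ((U1^2 - U2^2)*Z1) = snd f * n1 * (- (U0*U2 - U1*U3)*Z0 + (U0*U1 - d*U2*U3)*Z1)"
    using f fI2[OF hP hQ hZ mn U] fI4[OF hP hQ hZ mn U] by auto
  have eid': "fst (fst e / c, snd e / c) * snd ((U0*Z0 - d*U3*Z1),(- U0*Z1 + U3*Z0)) = snd (fst e / c, snd e / c) * fst ((U0*Z0 - d*U3*Z1),(- U0*Z1 + U3*Z0))"
    using eid by (simp add: divide_simps)
  show ?thesis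
  proof (intro conjI impI)
    assume "((U0*Z0 - d*U3*Z1), (- U0*Z1 + U3*Z0)) \<noteq> (0,0)"
    then show "K1_image R ((U0*Z0 - d*U3*Z1), (- U0*Z1 + U3*Z0))" unfolding c(2) by (rule K1_ten[OF _ eid'])
  next
    assume "(((U0^2 - d*U3^2)*Z0), ((U0*U1 - U2*U3)*Z0 + (U0*U2 - d*U1*U3)*Z1)) \<noteq> (0,0)"
    then show "K2_Z_image R (ten (b0,b1) (n0,n1)) (((U0^2 - d*U3^2)*Z0), ((U0*U1 - U2*U3)*Z0 + (U0*U2 - d*U1*U3)*Z1))" unfolding c(2)
      by (rule Z_ten) (simp add: fid4)
  next
    assume "((- (U0*U2 - U1*U3)*Z0 + (U0*U1 - d*U2*U3)*Z1), ((U1^2 - U2^2)*Z1)) \<noteq> (0,0)"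
    then show "K2_Z_image R (ten (b0,b1) (n0,n1)) ((- (U0*U2 - U1*U3)*Z0 + (U0*U1 - d*U2*U3)*Z1), ((U1^2 - U2^2)*Z1))" unfolding c(2)
      by (rule Z_ten) (simp add: fid5)
  qed
qed


theorem theorem6p2:
  fixes d :: "'a::field" and P Q R :: "'a pt3" and U0 U1 U2 U3 Z0 Z1 :: 'a
  assumes char: "(2::'a) \<noteq> 0"
    and elliptic: "d \<noteq> 0" "d \<noteq> 1"
    and P: "on_E d P" and Q: "on_E d Q"
    and R: "E_sum d P Q R"
    and UZ: "K2_image d P Q (U0,U1,U2,U3) (Z0,Z1)"
  shows
    "((U0*Z0 - d*U3*Z1, - U0*Z1 + U3*Z0) \<noteq> (0,0) \<longrightarrow>
        K1_image R (U0*Z0 - d*U3*Z1, - U0*Z1 + U3*Z0))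
     \<and> ((U0,U2) \<noteq> (0,0) \<longrightarrow> K1_image Q (U0,U2))
     \<and> ((U1,U3) \<noteq> (0,0) \<longrightarrow> K1_image Q (U1,U3))
     \<and> (((U0^2 - d*U3^2)*Z0, (U0*U1 - U2*U3)*Z0 + (U0*U2 - d*U1*U3)*Z1) \<noteq> (0,0) \<longrightarrow>
        K2_Z_image R Q ((U0^2 - d*U3^2)*Z0, (U0*U1 - U2*U3)*Z0 + (U0*U2 - d*U1*U3)*Z1))
     \<and> ((- (U0*U2 - U1*U3)*Z0 + (U0*U1 - d*U2*U3)*Z1, (U1^2 - U2^2)*Z1) \<noteq> (0,0) \<longrightarrow>
        K2_Z_image R Q (- (U0*U2 - U1*U3)*Z0 + (U0*U1 - d*U2*U3)*Z1, (U1^2 - U2^2)*Z1))"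
proof -
  obtain a b where a: "K1_image P a" and b: "K1_image Q b"
    and Us: "same_pt3 (U0,U1,U2,U3) (fst a * fst b, snd a * fst b, fst a * snd b, snd a * snd b)"
    and KZ: "K2_Z_image P Q (Z0,Z1)"
    using UZ unfolding K2_image_def by blast
  obtain m where m: "m \<noteq> (0,0)" "P = ten a m" using decomp[OF P a] by blast
  obtain n where n: "n \<noteq> (0,0)" "Q = ten b n" using decomp[OF Q b] by blast
  obtain a0 a1 b0 b1 m0 m1 n0 n1 where t: "a = (a0,a1)" "b = (b0,b1)" "m = (m0,m1)" "n = (n0,n1)"
    by (cases a, cases b, cases m, cases n) auto
  have ab: "(a0,a1) \<noteq> (0,0)" "(b0,b1) \<noteq> (0,0)" using a b t unfolding K1_image_def by auto
  obtain c where c: "c \<noteq> 0" "U0 = c*(a0*b0)" "U1 = c*(a1*b0)" "U2 = c*(a0*b1)" "U3 = c*(a1*b1)"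
    using Us t unfolding same_pt3_def by auto
  define bb0 where "bb0 = c*b0"
  define bb1 where "bb1 = c*b1"
  define nn0 where "nn0 = n0/c"
  define nn1 where "nn1 = n1/c"
  have Q': "Q = ten (bb0,bb1) (nn0,nn1)" using n(2) t c(1)
    by (simp add: ten_def bb0_def bb1_def nn0_def nn1_def)
  have Ueq: "U0 = a0*bb0" "U1 = a1*bb0" "U2 = a0*bb1" "U3 = a1*bb1"
    using c by (simp_all add: bb0_def bb1_def algebra_simps)
  have bbnz: "(bb0,bb1) \<noteq> (0,0)" using ab c(1) by (auto simp: bb0_def bb1_def)
  have nnnz: "(nn0,nn1) \<noteq> (0,0)" using n(1) t c(1) by (auto simp: nn0_def nn1_def)
  have mnz: "(m0,m1) \<noteq> (0,0)" using m t by auto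
  have Pt: "P = (a0*m0, a0*m1, a1*m0, a1*m1)" using m t by (simp add: ten_def)
  have Qt: "Q = (bb0*nn0, bb0*nn1, bb1*nn0, bb1*nn1)" using Q' by (simp add: ten_def)
  have "(a0*m0)^2 + d*(a1*m1)^2 = (a0*m1)^2 + (a1*m0)^2" using P unfolding Pt on_E_def by simp
  then have hP: "m0^2*(a0^2-a1^2) = m1^2*(a0^2-d*a1^2)" by algebra
  have "(bb0*nn0)^2 + d*(bb1*nn1)^2 = (bb0*nn1)^2 + (bb1*nn0)^2" using Q unfolding Qt on_E_def by simp
  then have hQ: "nn0^2*(bb0^2-bb1^2) = nn1^2*(bb0^2-d*bb1^2)" by algebra
  have hZ: "m0*nn0*Z1 = m1*nn1*Z0"
    using hZ_lemma[of a m "(bb0,bb1)" "(nn0,nn1)" "(Z0,Z1)"] KZ m(2) Q' ab t bbnz by simp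
  have Rl: "\<forall>s\<in>set (E_add_laws d (a0*m0, a0*m1, a1*m0, a1*m1) (bb0*nn0, bb0*nn1, bb1*nn0, bb1*nn1)). s \<noteq> (0,0,0,0) \<longrightarrow> same_pt3 s R"
    using R unfolding E_sum_def Pt Qt by blast
  note core = core[OF char elliptic hP hQ hZ mnz nnnz ab(1) bbnz Ueq Rl]
  have c2: "(U0,U2) \<noteq> (0,0) \<longrightarrow> K1_image Q (U0,U2)"
    unfolding Q' by (auto intro!: K1_ten simp: Ueq)
  have c3: "(U1,U3) \<noteq> (0,0) \<longrightarrow> K1_image Q (U1,U3)"
    unfolding Q' by (auto intro!: K1_ten simp: Ueq)
  show ?thesis using core c2 c3 unfolding Q'[symmetric] by blast
qed

end
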